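(* Let $k\ge0$, $\ell=2k$, and let $G=(X\cup Y,E)$ be a bipartite graph without isolated vertices, with a linear order $<_X$ of $X$ listing $X$ as $x_1,\dots,x_{|X|}$. If $e=\{x_p,y\}$ and $f=\{x_q,y'\}$ are distinct edges with $p+\ell<q$, then in every 2-layer $k$-planar drawing $(<_X,<_Y)$ of $G$ (with this $<_X$) it holds that $y<_Yy'$ or $y=y'$.
   Context: A 2-layer drawing of a bipartite graph $G=(X\cup Y,E)$ ($X\cap Y=\emptyset$, $E\subseteq X\times Y$) is a pair $(<_X,<_Y)$ of strict linear orders on $X$ and $Y$. Edges $\{x,y\},\{x',y'\}$ with $x\ne x'\in X$, $y\ne y'\in Y$ cross if $x<_Xx'$ and $y'<_Yy$. The drawing is $k$-planar if every edge crosses at most $k$ edges. *)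

theory Defs
  imports Main
begin

definition strict_lin_ord :: "'a set \<Rightarrow> ('a \<times> 'a) set \<Rightarrow> bool" where
  "strict_lin_ord A r \<longleftrightarrow> strict_linear_order_on A r \<and> r \<subseteq> A \<times> A"

definition bipartite_graph :: "'a set \<Rightarrow> 'a set \<Rightarrow> ('a \<times> 'a) set \<Rightarrow> bool" where
  "bipartite_graph X Y E \<longleftrightarrow> X \<inter> Y = {} \<and> E \<subseteq> X \<times> Y"

definition no_isolated_vertices :: "'a set \<Rightarrow> 'a set \<Rightarrow> ('a \<times> 'a) set \<Rightarrow> bool" where
  "no_isolated_vertices X Y E \<longleftrightarrow>
     (\<forall>x\<in>X. \<exists>y. (x, y) \<in> E) \<and> (\<forall>y\<in>Y. \<exists>x. (x, y) \<in> E)"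

definition crosses :: "('a \<times> 'a) set \<Rightarrow> ('a \<times> 'a) set \<Rightarrow> 'a \<times> 'a \<Rightarrow> 'a \<times> 'a \<Rightarrow> bool" where
  "crosses RX RY e f \<longleftrightarrow>
     (case e of (x, y) \<Rightarrow> case f of (x', y') \<Rightarrow>
        x \<noteq> x' \<and> y \<noteq> y' \<and>
        (((x, x') \<in> RX \<and> (y', y) \<in> RY) \<or> ((x', x) \<in> RX \<and> (y, y') \<in> RY)))"

definition two_layer_drawing :: "'a set \<Rightarrow> 'a set \<Rightarrow> ('a \<times> 'a) set \<Rightarrow> ('a \<times> 'a) set \<Rightarrow> bool" where
  "two_layer_drawing X Y RX RY \<longleftrightarrow> strict_lin_ord X RX \<and> strict_lin_ord Y RY"

definition k_planar :: "nat \<Rightarrow> ('a \<times> 'a) set \<Rightarrow> ('a \<times> 'a) set \<Rightarrow> ('a \<times> 'a) set \<Rightarrow> bool" where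
  "k_planar k E RX RY \<longleftrightarrow> (\<forall>e\<in>E. card {f \<in> E. crosses RX RY e f} \<le> k)"

text \<open>Position of x in the listing x_1,...,x_|X| of X according to RX (0-based; the
  paper's index is this plus one).\<close>

definition pos :: "'a set \<Rightarrow> ('a \<times> 'a) set \<Rightarrow> 'a \<Rightarrow> nat" where
  "pos X RX x = card {x' \<in> X. (x', x) \<in> RX}"

end

theory Submission
  imports Defs
begin

theorem lemma3p4:
  fixes k :: nat and X Y :: "'a set" and E RX RY :: "('a \<times> 'a) set"
    and x y x' y' :: 'a
  assumes "finite X" and "finite Y"
    and "bipartite_graph X Y E"
    and "no_isolated_vertices X Y E"
    and "two_layer_drawing X Y RX RY"
    and "k_planar k E RX RY"
    and "(x, y) \<in> E" and "(x', y') \<in> E" and "(x, y) \<noteq> (x', y')"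
    and "pos X RX x + 2 * k < pos X RX x'"
  shows "(y, y') \<in> RY \<or> y = y'"
proof (rule ccontr)
  assume neg: "\<not> ((y, y') \<in> RY \<or> y = y')"
  have EXY: "E \<subseteq> X \<times> Y" using assms(3) by (simp add: bipartite_graph_def)
  have finE: "finite E" using EXY assms(1,2) by (meson finite_SigmaI finite_subset)
  have tX: "trans RX" and iX: "irrefl RX" and toX: "total_on X RX" and sX: "RX \<subseteq> X \<times> X"
    using assms(5) by (auto simp: two_layer_drawing_def strict_lin_ord_def strict_linear_order_on_def)
  have tY: "trans RY" and iY: "irrefl RY" and toY: "total_on Y RY"
    using assms(5) by (auto simp: two_layer_drawing_def strict_lin_ord_def strict_linear_order_on_def)
  have xX: "x \<in> X" and x'X: "x' \<in> X" and yY: "y \<in> Y" and y'Y: "y' \<in> Y"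
    using EXY assms(7,8) by auto
  have yy': "(y', y) \<in> RY" using neg toY yY y'Y by (auto simp: total_on_def)
  define P where "P z = {u \<in> X. (u, z) \<in> RX}" for z
  have finP: "finite (P z)" for z using assms(1) by (simp add: P_def)
  have xx': "x \<noteq> x'" using assms(10) by auto
  have rxx': "(x, x') \<in> RX"
  proof (rule ccontr)
    assume "(x, x') \<notin> RX"
    then have "(x', x) \<in> RX" using toX xX x'X xx' by (auto simp: total_on_def)
    then have "P x' \<subseteq> P x" using tX by (auto simp: P_def dest: transD)
    then have "card (P x') \<le> card (P x)" using finP by (simp add: card_mono)
    then show False using assms(10) by (simp add: pos_def P_def)
  qed
  define Z where "Z = {z \<in> X. (x, z) \<in> RX \<and> (z, x') \<in> RX}"
  have finZ: "finite Z" using assms(1) by (simp add: Z_def)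
  have "P x' \<subseteq> P x \<union> {x} \<union> Z"
  proof
    fix u assume u: "u \<in> P x'"
    show "u \<in> P x \<union> {x} \<union> Z"
    proof (cases "u = x \<or> (u, x) \<in> RX")
      case True then show ?thesis using u by (auto simp: P_def)
    next
      case False
      then have "(x, u) \<in> RX" using toX xX u by (auto simp: total_on_def P_def)
      then show ?thesis using u by (auto simp: P_def Z_def)
    qed
  qed
  then have "card (P x') \<le> card (P x \<union> {x} \<union> Z)" using finP finZ by (simp add: card_mono)
  also have "\<dots> \<le> card (P x) + 1 + card Z"
    by (metis card_Un_le card_insert_le_m1 insert_is_Un le_trans add_le_mono1 One_nat_def
        card_1_singleton_iff)
  finally have cZ: "2 * k \<le> card Z" using assms(10) by (simp add: pos_def P_def)
  have "\<forall>z\<in>Z. \<exists>w. (z, w) \<in> E" using assms(4) by (auto simp: no_isolated_vertices_def Z_def)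
  then obtain w where w: "\<And>z. z \<in> Z \<Longrightarrow> (z, w z) \<in> E" by metis
  define A where "A = {f \<in> E. crosses RX RY (x, y) f}"
  define B where "B = {f \<in> E. crosses RX RY (x', y') f}"
  have cA: "card A \<le> k" using assms(6,7) by (simp add: k_planar_def A_def)
  have cB: "card B \<le> k" using assms(6,8) by (simp add: k_planar_def B_def)
  have finA: "finite A" "finite B" using finE by (auto simp: A_def B_def)
  have nZ: "x \<notin> Z" "x' \<notin> Z" using iX by (auto simp: Z_def irrefl_def)
  have yneq: "y \<noteq> y'" using neg by auto
  let ?S = "insert (x, y) (insert (x', y') ((\<lambda>z. (z, w z)) ` Z))"
  have sub: "?S \<subseteq> A \<union> B"
  proof -
    have "(x', y') \<in> A" using assms(8) xx' yneq rxx' yy' by (simp add: A_def crosses_def)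
    moreover have "(x, y) \<in> B" using assms(7) xx' yneq rxx' yy' by (simp add: B_def crosses_def)
    moreover have "(z, w z) \<in> A \<union> B" if z: "z \<in> Z" for z
    proof -
      have zE: "(z, w z) \<in> E" using w z .
      have wY: "w z \<in> Y" using zE EXY by auto
      have zx: "z \<noteq> x" "z \<noteq> x'" using z nZ by auto
      have r1: "(x, z) \<in> RX" "(z, x') \<in> RX" using z by (auto simp: Z_def)
      show ?thesis
      proof (cases "(w z, y) \<in> RY")
        case True
        then have "w z \<noteq> y" using iY by (auto simp: irrefl_def)
        then show ?thesis using True zE zx r1 by (simp add: A_def crosses_def)
      next
        case False
        then have "w z = y \<or> (y, w z) \<in> RY" using toY wY yY by (auto simp: total_on_def)
        then have "(y', w z) \<in> RY" using yy' tY by (auto dest: transD)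
        moreover then have "w z \<noteq> y'" using iY by (auto simp: irrefl_def)
        ultimately show ?thesis using zE zx r1 by (simp add: B_def crosses_def)
      qed
    qed
    ultimately show ?thesis by auto
  qed
  have "card ?S = card Z + 2"
  proof -
    have inj: "inj_on (\<lambda>z. (z, w z)) Z" by (auto simp: inj_on_def)
    have "card ((\<lambda>z. (z, w z)) ` Z) = card Z" using card_image[OF inj] .
    moreover have "(x, y) \<notin> (\<lambda>z. (z, w z)) ` Z" "(x', y') \<notin> (\<lambda>z. (z, w z)) ` Z"
      using nZ by auto
    ultimately show ?thesis using finZ xx' by simp
  qed
  moreover have "card ?S \<le> card (A \<union> B)" using sub finA by (simp add: card_mono)
  moreover have "card (A \<union> B) \<le> card A + card B" by (rule card_Un_le)
  ultimately show False using cZ cA cB by linarith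
qed

end
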